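(* Let $K$ be a convex body in $\mathbb{R}^d$ (a compact convex set with nonempty interior). If the complement $K^c=\mathbb{R}^d\setminus K$ admits a weak tiling by translates of $K$, i.e. there is a positive, locally finite Borel measure $\mu$ on $\mathbb{R}^d$ with $\mathbf{1}_K\ast\mu=\mathbf{1}_{K^c}$ almost everywhere, then $K$ is a convex polytope.
   Context: A measure is locally finite if it gives finite mass to every ball. A convex polytope is the convex hull of finitely many points. *)

theory Defs
  imports "HOL-Analysis.Analysis"
begin

end

theory Submission
  imports Defs
begin

lemma supp_frontier:
  fixes K :: "'a::euclidean_space set"
  assumes "convex K" "closed K" "interior K \<noteq> {}" "x \<in> frontier K"
  shows "\<exists>a. a \<noteq> 0 \<and> (\<forall>y\<in>K. a \<bullet> y \<le> a \<bullet> x) \<and> (\<forall>y\<in>interior K. a \<bullet> y < a \<bullet> x)"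
proof -
  have xK: "x \<in> K" "x \<notin> interior K" using assms(2,4) unfolding frontier_def by (auto simp: closure_closed)
  have ri: "rel_interior K = interior K"
    using assms(3) by (simp add: rel_interior_nonempty_interior)
  obtain a where "a \<noteq> 0" "\<And>y. y \<in> K \<Longrightarrow> a \<bullet> x \<le> a \<bullet> y" "\<And>y. y \<in> rel_interior K \<Longrightarrow> a \<bullet> x < a \<bullet> y"
    using supporting_hyperplane_rel_boundary[OF assms(1) xK(1)] xK(2) ri by auto
  then show ?thesis using ri
    by (intro exI[of _ "-a"]) auto
qed

lemma interior_strict:
  fixes K :: "'a::euclidean_space set"
  assumes "a \<noteq> 0" "\<forall>k\<in>K. a \<bullet> k \<le> b" "z \<in> interior K"
  shows "a \<bullet> z < b"
proof -
  obtain e where e: "e > 0" "ball z e \<subseteq> K" using assms(3) mem_interior by blast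
  define k where "k = z + (e / (2 * norm a)) *\<^sub>R a"
  have "dist z k = e/2" using assms(1) e by (simp add: k_def dist_norm)
  then have "k \<in> K" using e by auto
  then have "a \<bullet> k \<le> b" using assms(2) by auto
  moreover have "a \<bullet> k = a \<bullet> z + e/2 * norm a"
    using assms(1) by (simp add: k_def inner_add_right power2_norm_eq_inner[symmetric] power2_eq_square)
  moreover have "e/2 * norm a > 0" using e assms(1) by simp
  ultimately show ?thesis by linarith
qed

definition related :: "'a::euclidean_space set \<Rightarrow> 'a \<Rightarrow> 'a \<Rightarrow> bool" where
  "related K x y \<longleftrightarrow> (\<exists>a b. a \<noteq> 0 \<and> (\<forall>k\<in>K. a \<bullet> k \<le> b) \<and> a \<bullet> x = b \<and> a \<bullet> y = b)"

lemma many_unrelated: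
  fixes K :: "'a::euclidean_space set"
  assumes cK: "compact K" and vK: "convex K" and iK: "interior K \<noteq> {}" and np: "\<not> polytope K"
  shows "\<exists>(\<F> :: 'a set set) p. finite \<F> \<and> card \<F> = N \<and> (\<forall>F\<in>\<F>. p F \<in> frontier K)
     \<and> (\<forall>F\<in>\<F>. \<forall>G\<in>\<F>. F \<noteq> G \<longrightarrow> \<not> related K (p F) (p G))"
proof -
  have clK: "closed K" using cK compact_imp_closed by auto
  define P where "P F \<longleftrightarrow> F face_of K \<and> F \<noteq> K \<and> F \<noteq> {}" for F
  define MF where "MF = {F. P F \<and> (\<forall>G. P G \<and> F \<subseteq> G \<longrightarrow> G = F)}"
  have Pfr: "F \<subseteq> frontier K" if "P F" for F
    using face_of_subset_rel_frontier[of F K] that rel_frontier_nonempty_interior[OF iK]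
    unfolding P_def by auto
  have exp_face: "P (K \<inter> {y. a \<bullet> y = a \<bullet> x})" if "a \<noteq> 0" "\<forall>y\<in>K. a \<bullet> y \<le> a \<bullet> x" "x \<in> K" for a x
  proof -
    have "(K \<inter> {y. a \<bullet> y = a \<bullet> x}) face_of K"
      using that by (intro face_of_Int_supporting_hyperplane_le vK) auto
    moreover obtain z where "z \<in> interior K" using iK by auto
    then have "z \<in> K" "a \<bullet> z < a \<bullet> x" using interior_strict[of a K "a \<bullet> x" z] that interior_subset by auto
    moreover have "K \<inter> {y. a \<bullet> y = a \<bullet> x} \<noteq> K"
      using \<open>z \<in> K\<close> \<open>a \<bullet> z < a \<bullet> x\<close> by (metis (mono_tags, lifting) IntD2 mem_Collect_eq less_irrefl)
    ultimately show ?thesis unfolding P_def using that by auto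
  qed
  have riF: "rel_interior F \<noteq> {}" if "P F" for F
    using that unfolding P_def by (metis face_of_imp_convex rel_interior_eq_empty)
  have max_sub: "G = F" if "F \<in> MF" "P G" "x \<in> rel_interior F" "x \<in> G" for F G x
  proof -
    have "F \<subseteq> G"
      using subset_of_face_of[of G K F] that unfolding P_def MF_def by (auto dest: face_of_imp_subset)
    then show ?thesis using that unfolding MF_def by auto
  qed
  have exposed: "\<exists>a b. a \<noteq> 0 \<and> (\<forall>k\<in>K. a \<bullet> k \<le> b) \<and> F = K \<inter> {y. a \<bullet> y = b}" if "F \<in> MF" for F
  proof -
    have PF: "P F" using that MF_def by auto
    obtain x where x: "x \<in> rel_interior F" using riF[OF PF] by auto
    have "x \<in> F" using x rel_interior_subset by auto
    then have "x \<in> frontier K" using Pfr[OF PF] by auto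
    then obtain a where a: "a \<noteq> 0" "\<forall>y\<in>K. a \<bullet> y \<le> a \<bullet> x" "\<forall>y\<in>interior K. a \<bullet> y < a \<bullet> x"
      using supp_frontier[OF vK clK iK] by blast
    have "x \<in> K" using \<open>x \<in> frontier K\<close> clK frontier_subset_closed by auto
    have "K \<inter> {y. a \<bullet> y = a \<bullet> x} = F"
      using max_sub[OF that exp_face[OF a(1,2) \<open>x \<in> K\<close>] x] \<open>x \<in> K\<close> by auto
    then show ?thesis using a by blast
  qed
  have cover: "\<exists>F\<in>MF. x \<in> F" if xfr: "x \<in> frontier K" for x
  proof -
    obtain a where a: "a \<noteq> 0" "\<forall>y\<in>K. a \<bullet> y \<le> a \<bullet> x"
      using supp_frontier[OF vK clK iK xfr] by blast
    have xK: "x \<in> K" using xfr clK frontier_subset_closed by auto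
    define Q where "Q G \<longleftrightarrow> P G \<and> x \<in> G" for G
    have Q0: "Q (K \<inter> {y. a \<bullet> y = a \<bullet> x})" unfolding Q_def using exp_face[OF a xK] xK by auto
    have bnd: "\<forall>G. Q G \<longrightarrow> nat (aff_dim G + 1) < nat (int DIM('a) + 2)"
    proof (intro allI impI)
      fix G :: "'a set" show "nat (aff_dim G + 1) < nat (int DIM('a) + 2)"
        using aff_dim_le_DIM[of G] aff_dim_geq[of G] by arith
    qed
    obtain G where G: "Q G" "\<forall>H. Q H \<longrightarrow> nat (aff_dim H + 1) \<le> nat (aff_dim G + 1)"
      using Lattices_Big.ex_has_greatest_nat[OF Q0 bnd] by blast
    have "G \<in> MF"
      unfolding MF_def
    proof (intro CollectI conjI allI impI)
      show "P G" using G Q_def by auto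
      fix H assume H: "P H \<and> G \<subseteq> H"
      show "H = G"
      proof (rule ccontr)
        assume ne: "H \<noteq> G"
        have "G face_of H" using H G(1) unfolding Q_def P_def
          by (meson face_of_imp_subset face_of_subset)
        then have "aff_dim G < aff_dim H"
          using face_of_aff_dim_lt[of H G] H ne unfolding P_def by (auto dest: face_of_imp_convex)
        moreover have "Q H" using H G(1) Q_def by auto
        ultimately show False using G(2)[rule_format, of H] aff_dim_geq[of G] by arith
      qed
    qed
    then show ?thesis using G(1) Q_def by auto
  qed
  have infMF: "infinite MF"
  proof
    assume fin: "finite MF"
    obtain a b where ab: "\<And>F. F \<in> MF \<Longrightarrow> a F \<noteq> 0 \<and> (\<forall>k\<in>K. a F \<bullet> k \<le> b F) \<and> F = K \<inter> {y. a F \<bullet> y = b F}"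
    proof -
    have "\<forall>F\<in>MF. \<exists>ab. fst ab \<noteq> 0 \<and> (\<forall>k\<in>K. fst ab \<bullet> k \<le> snd ab) \<and> F = K \<inter> {y. fst ab \<bullet> y = snd ab}"
      using exposed by fastforce
    then obtain ab where "\<forall>F\<in>MF. fst (ab F) \<noteq> 0 \<and> (\<forall>k\<in>K. fst (ab F) \<bullet> k \<le> snd (ab F)) \<and> F = K \<inter> {y. fst (ab F) \<bullet> y = snd (ab F)}"
      by (rule bchoice[elim_format]) blast
    then show ?thesis using that[of "\<lambda>F. fst (ab F)" "\<lambda>F. snd (ab F)"] by blast
  qed
    define H where "H = (\<lambda>F. {y. a F \<bullet> y \<le> b F}) ` MF"
    have "K = \<Inter> H"
    proof
      show "K \<subseteq> \<Inter> H" using ab unfolding H_def by auto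
      show "\<Inter> H \<subseteq> K"
      proof
        fix y assume y: "y \<in> \<Inter> H"
        show "y \<in> K"
        proof (rule ccontr)
          assume yK: "y \<notin> K"
          obtain z where z: "z \<in> interior K" using iK by auto
          have zK: "z \<in> K" using z interior_subset by auto
          have "closed_segment z y \<inter> frontier K \<noteq> {}"
            using connected_Int_frontier[of "closed_segment z y" K] zK yK by auto
          then obtain w where w: "w \<in> closed_segment z y" "w \<in> frontier K" by auto
          obtain F where F: "F \<in> MF" "w \<in> F" using cover[OF w(2)] by auto
          have ha: "a F \<bullet> w = b F" using ab[OF F(1)] F(2) by auto
          have hz: "a F \<bullet> z < b F" using interior_strict[of "a F" K "b F" z] ab[OF F(1)] z by auto
          have hy: "a F \<bullet> y \<le> b F" using y F(1) unfolding H_def by auto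
          obtain u where u: "0 \<le> u" "u \<le> 1" "w = (1 - u) *\<^sub>R z + u *\<^sub>R y"
            using w(1) by (auto simp: in_segment)
          have "w \<noteq> y" using w(2) yK clK frontier_subset_closed by auto
          then have "u < 1" using u by (cases "u = 1") auto
          have "a F \<bullet> w = (1 - u) * (a F \<bullet> z) + u * (a F \<bullet> y)"
            using u(3) by (simp add: inner_add_right)
          also have "\<dots> < (1 - u) * b F + u * b F"
          proof -
            have "(1 - u) * (a F \<bullet> z) < (1 - u) * b F"
              using \<open>u < 1\<close> hz by (intro mult_strict_left_mono) auto
            moreover have "u * (a F \<bullet> y) \<le> u * b F"
              using u(1) hy by (intro mult_left_mono) auto
            ultimately show ?thesis by linarith
          qed
          finally show False using ha by (simp add: algebra_simps)
        qed
      qed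
    qed
    moreover have "finite H" using fin H_def by auto
    moreover have "\<forall>h\<in>H. \<exists>c d. c \<noteq> 0 \<and> h = {x. c \<bullet> x \<le> d}" using ab H_def by auto
    ultimately have "polyhedron K" unfolding polyhedron_def by blast
    moreover have "bounded K" using cK compact_imp_bounded by auto
    ultimately show False using np polytope_eq_bounded_polyhedron by metis
  qed
  have unrel: "\<not> related K x y" if "F \<in> MF" "G \<in> MF" "F \<noteq> G" "x \<in> rel_interior F" "y \<in> rel_interior G" for F G x y
  proof
    assume "related K x y"
    then obtain a b where a: "a \<noteq> 0" "\<forall>k\<in>K. a \<bullet> k \<le> b" "a \<bullet> x = b" "a \<bullet> y = b"
      unfolding related_def by auto
    have xK: "x \<in> K" using that(1,4) rel_interior_subset[of F] rel_interior_subset[of G] face_of_imp_subset[of F K] face_of_imp_subset[of G K] unfolding MF_def P_def by auto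
    have "P (K \<inter> {z. a \<bullet> z = a \<bullet> x})" using exp_face[of a x] a xK by auto
    moreover have yK: "y \<in> K" using that(2,5) rel_interior_subset[of F] rel_interior_subset[of G] face_of_imp_subset[of F K] face_of_imp_subset[of G K] unfolding MF_def P_def by auto
    ultimately have "K \<inter> {z. a \<bullet> z = a \<bullet> x} = F" "K \<inter> {z. a \<bullet> z = a \<bullet> x} = G"
      using max_sub[OF that(1) _ that(4)] max_sub[OF that(2) _ that(5)] xK yK a by auto
    then show False using that(3) by auto
  qed
  obtain \<F> where F: "\<F> \<subseteq> MF" "finite \<F>" "card \<F> = N"
    using infinite_arbitrarily_large[OF infMF] by blast
  define p :: "'a set \<Rightarrow> 'a" where "p F = (SOME x. x \<in> rel_interior F)" for F
  have pF: "p F \<in> rel_interior F" if "F \<in> MF" for F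
  proof -
    have "rel_interior F \<noteq> {}" using riF that unfolding MF_def by auto
    then show ?thesis unfolding p_def by (metis ex_in_conv someI_ex)
  qed
  have "\<forall>F\<in>\<F>. p F \<in> frontier K"
  proof
    fix F assume "F \<in> \<F>"
    then have FM: "F \<in> MF" using F(1) by auto
    then have "P F" unfolding MF_def by auto
    then show "p F \<in> frontier K" using Pfr pF[OF FM] rel_interior_subset by auto
  qed
  moreover have "\<forall>F\<in>\<F>. \<forall>G\<in>\<F>. F \<noteq> G \<longrightarrow> \<not> related K (p F) (p G)"
  proof (intro ballI impI)
    fix F G assume "F \<in> \<F>" "G \<in> \<F>" "F \<noteq> G"
    then show "\<not> related K (p F) (p G)" using unrel[of F G "p F" "p G"] pF F(1) by auto
  qed
  ultimately show ?thesis using F(2,3) by blast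
qed

lemma open_pos_lborel:
  fixes V :: "'a::euclidean_space set"
  assumes "open V" "V \<noteq> {}"
  shows "0 < emeasure lborel V"
proof -
  obtain c where c: "c \<in> V" using assms by auto
  then obtain r where r: "r > 0" "ball c r \<subseteq> V" using assms open_contains_ball by blast
  have "0 < emeasure lborel (ball c r)"
    using r by (simp add: emeasure_ball)
  also have "\<dots> \<le> emeasure lborel V"
    using r assms by (intro emeasure_mono) auto
  finally show ?thesis .
qed

lemma AE_open_contra:
  fixes V :: "'a::euclidean_space set"
  assumes "open V" "V \<noteq> {}" "AE x in lborel. P x" "\<And>x. x \<in> V \<Longrightarrow> \<not> P x"
  shows False
proof -
  from assms(3) obtain N where N: "{x \<in> space lborel. \<not> P x} \<subseteq> N" "emeasure lborel N = 0" "N \<in> sets lborel"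
    by (auto elim: AE_E)
  have "V \<subseteq> N" using N(1) assms(4) by auto
  then have "emeasure lborel V \<le> emeasure lborel N" using N(3) by (intro emeasure_mono) auto
  then show False using open_pos_lborel[OF assms(1,2)] N(2) by simp
qed


lemma M1:
  fixes K :: "'a::euclidean_space set" and \<mu> :: "'a measure"
  assumes cK: "compact K" and sets: "sets \<mu> = sets borel"
    and AE: "AE x in lborel. (\<integral>\<^sup>+ y. indicator K (x - y) \<partial>\<mu>) = indicator (- K) x"
    and z: "z \<in> interior K"
  shows "emeasure \<mu> {t. z - t \<in> interior K} = 0"
proof -
  have clK: "closed K" using cK compact_imp_closed by auto
  have ne: "- interior K \<noteq> {}"
  proof
    assume "- interior K = {}"
    then have "K = UNIV" using interior_subset by auto
    then show False using cK compact_imp_bounded not_bounded_UNIV by auto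
  qed
  have cl: "closed (- interior K)" by auto
  define B where "B n = {t. 1 / Suc n < infdist (z - t) (- interior K)}" for n :: nat
  have Bsets: "B n \<in> sets \<mu>" for n
  proof -
    have "open (B n)" unfolding B_def
      by (intro open_Collect_less continuous_intros)
    then show ?thesis using sets by auto
  qed
  have Bz: "emeasure \<mu> (B n) = 0" for n
  proof (rule ccontr)
    assume "emeasure \<mu> (B n) \<noteq> 0"
    then have pos: "0 < emeasure \<mu> (B n)" by (simp add: zero_less_iff_neq_zero)
    define V where "V = ball z (1 / Suc n) \<inter> interior K"
    have "open V" unfolding V_def by auto
    moreover have "z \<in> V" using z unfolding V_def by simp
    then have "V \<noteq> {}" by auto
    moreover have "\<not> ((\<integral>\<^sup>+ y. indicator K (x - y) \<partial>\<mu>) = indicator (- K) x)" if xV: "x \<in> V" for x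
    proof -
      have "emeasure \<mu> (B n) = (\<integral>\<^sup>+ t. indicator (B n) t \<partial>\<mu>)"
        using Bsets by simp
      also have "\<dots> \<le> (\<integral>\<^sup>+ t. indicator K (x - t) \<partial>\<mu>)"
      proof (intro nn_integral_mono)
        fix t
        show "indicator (B n) t \<le> (indicator K (x - t) :: ennreal)"
        proof (cases "t \<in> B n")
          case True
          have "x - t \<in> K"
          proof (rule ccontr)
            assume "x - t \<notin> K"
            then have "x - t \<in> - interior K" using interior_subset by auto
            then have "infdist (z - t) (- interior K) \<le> dist (z - t) (x - t)" by (rule infdist_le)
            also have "\<dots> = dist z x" by (simp add: dist_norm)
            also have "\<dots> < 1 / Suc n" using xV unfolding V_def by auto
            finally show False using True unfolding B_def by auto
          qed
          then show ?thesis by (auto simp: indicator_def)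
        qed auto
      qed
      finally have "0 < (\<integral>\<^sup>+ t. indicator K (x - t) \<partial>\<mu>)" using pos by auto
      moreover have "x \<in> K" using xV interior_subset unfolding V_def by auto
      ultimately show ?thesis by auto
    qed
    ultimately show False using AE_open_contra[OF _ _ AE] by blast
  qed
  have "{t. z - t \<in> interior K} \<subseteq> (\<Union>n. B n)"
  proof
    fix t assume "t \<in> {t. z - t \<in> interior K}"
    then have "0 < infdist (z - t) (- interior K)"
      using infdist_pos_not_in_closed[OF cl ne] by auto
    then obtain n where "1 / Suc n < infdist (z - t) (- interior K)"
      by (metis reals_Archimedean inverse_eq_divide of_nat_Suc)
    then show "t \<in> (\<Union>n. B n)" unfolding B_def by auto
  qed
  moreover have "(\<Union>n. B n) \<in> null_sets \<mu>"
    using Bz Bsets by (intro null_sets_UN) auto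
  ultimately show ?thesis
    by (metis (no_types, lifting) emeasure_mono le_zero_eq null_setsD1 null_setsD2)
qed

lemma M2:
  fixes K :: "'a::euclidean_space set" and \<mu> :: "'a measure"
  assumes cK: "compact K" and sets: "sets \<mu> = sets borel"
    and lf: "\<And>x r. emeasure \<mu> (ball x r) < \<infinity>"
    and AE: "AE x in lborel. (\<integral>\<^sup>+ y. indicator K (x - y) \<partial>\<mu>) = indicator (- K) x"
    and x: "x \<in> frontier K"
  shows "1 \<le> emeasure \<mu> {t. x - t \<in> K}"
proof (rule ccontr)
  assume "\<not> 1 \<le> emeasure \<mu> {t. x - t \<in> K}"
  then have lt: "emeasure \<mu> {t. x - t \<in> K} < 1" by auto
  have clK: "closed K" using cK compact_imp_closed by auto
  have xK: "x \<in> K" using x clK frontier_subset_closed by auto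
  then have Kne: "K \<noteq> {}" by auto
  obtain Bd where Bd: "\<And>k. k \<in> K \<Longrightarrow> norm k \<le> Bd"
    using cK compact_imp_bounded bounded_iff by metis
  define A where "A n = {t. infdist (x - t) K \<le> 1 / Suc n}" for n :: nat
  have Asets: "A n \<in> sets \<mu>" for n
  proof -
    have "closed (A n)" unfolding A_def
      by (intro closed_Collect_le continuous_intros)
    then show ?thesis using sets by auto
  qed
  have Aball: "A n \<subseteq> ball 0 (2 * Bd + 2)" for n
  proof
    fix t assume "t \<in> A n"
    then have a1: "infdist (x - t) K \<le> 1 / real (Suc n)" unfolding A_def by simp
    have "1 / real (Suc n) \<le> 1" by (simp add: divide_le_eq)
    then have le: "infdist (x - t) K \<le> 1" using a1 by linarith
    obtain k where k: "k \<in> K" "infdist (x - t) K = dist (x - t) k"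
      using infdist_attains_inf[OF clK Kne] by blast
    have "norm t \<le> norm x + norm (x - t)" using norm_triangle_ineq4[of x "x - t"] by simp
    moreover have "norm (x - t) \<le> norm k + dist (x - t) k"
      using norm_triangle_ineq[of k "(x - t) - k"] by (simp add: dist_norm)
    ultimately have "norm t \<le> norm x + norm k + dist (x - t) k" by linarith
    also have "\<dots> \<le> Bd + Bd + 1" using Bd[OF xK] Bd[OF k(1)] k(2) le by linarith
    finally show "t \<in> ball 0 (2 * Bd + 2)" by auto
  qed
  have Afin: "emeasure \<mu> (A n) \<noteq> \<infinity>" for n
  proof -
    have "emeasure \<mu> (A n) \<le> emeasure \<mu> (ball 0 (2 * Bd + 2))"
      using Aball sets by (intro emeasure_mono) auto
    then show ?thesis using lf[of 0 "2 * Bd + 2"] by (auto simp: top_unique)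
  qed
  have dec: "decseq A"
    unfolding decseq_def
  proof (intro allI impI subsetI)
    fix m n :: nat and t assume mn: "m \<le> n" and t: "t \<in> A n"
    have "1 / real (Suc n) \<le> 1 / real (Suc m)" using mn by (intro frac_le) auto
    then show "t \<in> A m" using t unfolding A_def by auto
  qed
  have inter: "(\<Inter>n. A n) = {t. x - t \<in> K}"
  proof
    show "{t. x - t \<in> K} \<subseteq> (\<Inter>n. A n)" unfolding A_def by auto
    show "(\<Inter>n. A n) \<subseteq> {t. x - t \<in> K}"
    proof
      fix t assume t: "t \<in> (\<Inter>n. A n)"
      show "t \<in> {t. x - t \<in> K}"
      proof (rule ccontr)
        assume "t \<notin> {t. x - t \<in> K}"
        then have "0 < infdist (x - t) K" using infdist_pos_not_in_closed[OF clK Kne] by auto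
        then obtain n where "1 / Suc n < infdist (x - t) K"
          by (metis reals_Archimedean inverse_eq_divide of_nat_Suc)
        moreover have "t \<in> A n" using t by auto
        ultimately show False unfolding A_def by auto
      qed
    qed
  qed
  have "(INF n. emeasure \<mu> (A n)) = emeasure \<mu> (\<Inter>n. A n)"
    using Asets dec Afin by (intro INF_emeasure_decseq) auto
  then have "(INF n. emeasure \<mu> (A n)) < 1" using lt inter by simp
  then obtain n where n: "emeasure \<mu> (A n) < 1" by (auto simp: INF_less_iff)
  define V where "V = ball x (1 / Suc n) \<inter> - K"
  have "open V" unfolding V_def using clK by auto
  moreover have "V \<noteq> {}"
  proof -
    obtain y where "y \<notin> K" "dist x y < 1 / Suc n"
      using x unfolding frontier_straddle by (meson of_nat_0_less_iff zero_less_Suc divide_pos_pos zero_less_one)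
    then show ?thesis unfolding V_def by auto
  qed
  moreover have "\<not> ((\<integral>\<^sup>+ y. indicator K (x' - y) \<partial>\<mu>) = indicator (- K) x')" if xV: "x' \<in> V" for x'
  proof -
    have "(\<integral>\<^sup>+ t. indicator K (x' - t) \<partial>\<mu>) \<le> (\<integral>\<^sup>+ t. indicator (A n) t \<partial>\<mu>)"
    proof (intro nn_integral_mono)
      fix t
      show "indicator K (x' - t) \<le> (indicator (A n) t :: ennreal)"
      proof (cases "x' - t \<in> K")
        case True
        then have "infdist (x - t) K \<le> dist (x - t) (x' - t)" by (rule infdist_le)
        also have "\<dots> = dist x x'" by (simp add: dist_norm)
        also have "\<dots> < 1 / Suc n" using xV unfolding V_def by auto
        finally have "t \<in> A n" unfolding A_def by auto
        then show ?thesis by (auto simp: indicator_def)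
      qed (auto simp: indicator_def)
    qed
    also have "\<dots> = emeasure \<mu> (A n)" using Asets by simp
    finally have "(\<integral>\<^sup>+ t. indicator K (x' - t) \<partial>\<mu>) < 1" using n by auto
    moreover have "x' \<notin> K" using xV unfolding V_def by auto
    ultimately show ?thesis by auto
  qed
  ultimately show False using AE_open_contra[OF _ _ AE] by blast
qed

lemma Sep:
  fixes K :: "'a::euclidean_space set"
  assumes cK: "compact K" and vK: "convex K" and iK: "interior K \<noteq> {}"
    and tO: "\<not> (\<exists>z\<in>interior K. z - t \<in> interior K)"
    and x: "x \<in> K" "x - t \<in> K" and y: "y \<in> K" "y - t \<in> K"
  shows "related K x y"
proof -
  have clK: "closed K" using cK compact_imp_closed by auto
  define T where "T = (\<lambda>w. w + t) ` interior K"
  have "convex (interior K)" using vK convex_interior by auto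
  moreover have "convex T" unfolding T_def using vK convex_interior convex_translation by (metis add.commute image_cong)
  moreover have "T \<noteq> {}" using iK T_def by auto
  moreover have "interior K \<inter> T = {}"
    using tO unfolding T_def by force
  ultimately obtain a b where ab: "a \<noteq> 0" "\<forall>w\<in>interior K. a \<bullet> w \<le> b" "\<forall>w\<in>T. a \<bullet> w \<ge> b"
    using separating_hyperplane_sets[of "interior K" T] iK by blast
  have cl: "closure (interior K) = K"
    using convex_closure_interior[OF vK iK] clK by (simp add: closure_closed)
  have K1: "K \<subseteq> {w. a \<bullet> w \<le> b}"
  proof -
    have "closure (interior K) \<subseteq> {w. a \<bullet> w \<le> b}"
      using ab(2) by (intro closure_minimal) (auto simp: closed_halfspace_le)
    then show ?thesis using cl by simp
  qed
  have K2: "K \<subseteq> {w. a \<bullet> w \<ge> b - a \<bullet> t}"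
  proof -
    have "interior K \<subseteq> {w. a \<bullet> w \<ge> b - a \<bullet> t}"
      using ab(3) unfolding T_def by (auto simp: inner_add_right)
    then have "closure (interior K) \<subseteq> {w. a \<bullet> w \<ge> b - a \<bullet> t}"
      by (intro closure_minimal) (auto simp: closed_halfspace_ge)
    then show ?thesis using cl by simp
  qed
  have "a \<bullet> x = b" using K1 K2 x by (force simp: inner_diff_right)
  moreover have "a \<bullet> y = b" using K1 K2 y by (force simp: inner_diff_right)
  ultimately show ?thesis unfolding related_def using ab(1) K1 by blast
qed

lemma M3:
  fixes K :: "'a::euclidean_space set" and \<mu> :: "'a measure"
  assumes sets: "sets \<mu> = sets borel"
    and z0: "\<And>z. z \<in> interior K \<Longrightarrow> emeasure \<mu> {t. z - t \<in> interior K} = 0"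
    and C: "compact C" "C \<subseteq> {t. \<exists>z\<in>interior K. z - t \<in> interior K}"
  shows "C \<in> null_sets \<mu>"
proof -
  define U where "U z = {t. z - t \<in> interior K}" for z
  have Uopen: "open (U z)" for z
  proof -
    have "U z = (\<lambda>t. z - t) -` interior K" unfolding U_def by auto
    then show ?thesis by (auto intro!: continuous_open_vimage continuous_intros)
  qed
  have "C \<subseteq> \<Union>(U ` interior K)" using C(2) unfolding U_def by auto
  then obtain T where T: "T \<subseteq> U ` interior K" "finite T" "C \<subseteq> \<Union>T"
    using compactE[OF C(1)] Uopen by (metis imageE)
  have "(\<Union>S\<in>T. S) \<in> null_sets \<mu>"
  proof (intro null_sets_UN')
    show "countable T" using T(2) by (rule countable_finite)
    fix S assume "S \<in> T"
    then obtain z where z: "z \<in> interior K" "S = U z" using T(1) by auto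
    have "S \<in> sets \<mu>" using Uopen z sets by auto
    then show "S \<in> null_sets \<mu>" using z0[OF z(1)] z(2) unfolding U_def by auto
  qed
  moreover have "C \<in> sets \<mu>" using C(1) sets by (simp add: borel_closed compact_imp_closed)
  ultimately show ?thesis using T(3) by (metis null_sets_subset Sup_set_def image_ident)
qed

theorem theorem4p1:
  fixes K :: "'a::euclidean_space set" and \<mu> :: "'a measure"
  assumes "compact K" and "convex K" and "interior K \<noteq> {}"
    and "sets \<mu> = sets borel"
    and "\<And>x r. emeasure \<mu> (ball x r) < \<infinity>"
    and "AE x in lborel. (\<integral>\<^sup>+ y. indicator K (x - y) \<partial>\<mu>) = indicator (- K) x"
  shows "polytope K"
proof (rule ccontr)
  assume np: "\<not> polytope K"
  note cK = assms(1) and vK = assms(2) and iK = assms(3) and sets = assms(4)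
    and lf = assms(5) and AE = assms(6)
  have clK: "closed K" using cK compact_imp_closed by auto
  obtain Bd where Bd: "\<And>k. k \<in> K \<Longrightarrow> norm k \<le> Bd"
    using cK compact_imp_bounded bounded_iff by metis
  define R where "R = 2 * Bd + 2"
  define M where "M = emeasure \<mu> (ball 0 R)"
  have "M < top" using lf[of 0 R] unfolding M_def by simp
  then obtain N :: nat where N: "M < of_nat N" using ennreal_Ex_less_of_nat by blast
  obtain \<F> :: "'a set set" and p where F: "finite \<F>" "card \<F> = N" "\<forall>F\<in>\<F>. p F \<in> frontier K"
    "\<forall>F\<in>\<F>. \<forall>G\<in>\<F>. F \<noteq> G \<longrightarrow> \<not> related K (p F) (p G)"
    using many_unrelated[OF cK vK iK np, of N] by (elim exE conjE) (rule that)
  define S where "S x = {t. x - t \<in> K}" for x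
  have Sclosed: "closed (S x)" for x
  proof -
    have "S x = (\<lambda>t. x - t) -` K" unfolding S_def by auto
    then show ?thesis using clK by (auto intro!: continuous_closed_vimage continuous_intros)
  qed
  have Ssets: "S x \<in> sets \<mu>" for x using Sclosed sets by (simp add: borel_closed)
  have Sball: "S x \<subseteq> ball 0 R" if "x \<in> K" for x
  proof
    fix t assume "t \<in> S x"
    then have "x - t \<in> K" unfolding S_def by auto
    then have "norm (x - t) \<le> Bd" using Bd by auto
    moreover have "norm x \<le> Bd" using Bd that by auto
    moreover have "norm t \<le> norm x + norm (x - t)" using norm_triangle_ineq4[of x "x - t"] by simp
    ultimately show "t \<in> ball 0 R" unfolding R_def by auto
  qed
  have pK: "p F \<in> K" if "F \<in> \<F>" for F
    using F(3) that clK frontier_subset_closed by auto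
  have z0: "\<And>z. z \<in> interior K \<Longrightarrow> emeasure \<mu> {t. z - t \<in> interior K} = 0"
    by (rule M1[OF cK sets AE])
  have pair_null: "S (p F) \<inter> S (p G) \<in> null_sets \<mu>" if FG: "F \<in> \<F>" "G \<in> \<F>" "F \<noteq> G" for F G
  proof (rule M3[OF sets z0])
    have "S (p F) \<inter> S (p G) \<subseteq> ball 0 R" using Sball[OF pK[OF FG(1)]] by auto
    then have "bounded (S (p F) \<inter> S (p G))"
      by (rule bounded_subset[OF bounded_ball])
    then show "compact (S (p F) \<inter> S (p G))"
      using Sclosed by (simp add: compact_eq_bounded_closed closed_Int)
    show "S (p F) \<inter> S (p G) \<subseteq> {t. \<exists>z\<in>interior K. z - t \<in> interior K}"
    proof
      fix t assume t: "t \<in> S (p F) \<inter> S (p G)"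
      show "t \<in> {t. \<exists>z\<in>interior K. z - t \<in> interior K}"
      proof (rule ccontr)
        assume "t \<notin> {t. \<exists>z\<in>interior K. z - t \<in> interior K}"
        then have "related K (p F) (p G)"
          using Sep[OF cK vK iK, of t "p F" "p G"] t pK FG unfolding S_def by auto
        then show False using F(4) FG by auto
      qed
    qed
  qed
  define I where "I = {(F, G). F \<in> \<F> \<and> G \<in> \<F> \<and> F \<noteq> G}"
  define Pb where "Pb = (\<Union>FG\<in>I. S (p (fst FG)) \<inter> S (p (snd FG)))"
  have Pbnull: "Pb \<in> null_sets \<mu>"
    unfolding Pb_def
  proof (intro null_sets_UN')
    have "I \<subseteq> \<F> \<times> \<F>" unfolding I_def by auto
    then have "finite I" using F(1) by (meson finite_SigmaI finite_subset)
    then show "countable I" by (rule countable_finite)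
    fix FG assume "FG \<in> I"
    then obtain F G where "FG = (F, G)" "F \<in> \<F>" "G \<in> \<F>" "F \<noteq> G" unfolding I_def by auto
    then show "S (p (fst FG)) \<inter> S (p (snd FG)) \<in> null_sets \<mu>"
      using pair_null by simp
  qed
  define D where "D F = S (p F) - Pb" for F
  have Dsets: "D F \<in> sets \<mu>" for F unfolding D_def using Ssets Pbnull by auto
  have disj: "disjoint_family_on D \<F>"
    unfolding disjoint_family_on_def
  proof (intro ballI impI)
    fix F G assume FG: "F \<in> \<F>" "G \<in> \<F>" "F \<noteq> G"
    then have "(F, G) \<in> I" unfolding I_def by auto
    then have "S (p F) \<inter> S (p G) \<subseteq> Pb"
      using UN_upper[OF \<open>(F, G) \<in> I\<close>, of "\<lambda>FG. S (p (fst FG)) \<inter> S (p (snd FG))"]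
      unfolding Pb_def by simp
    then show "D F \<inter> D G = {}" unfolding D_def by auto
  qed
  have Dge: "1 \<le> emeasure \<mu> (D F)" if "F \<in> \<F>" for F
  proof -
    have "emeasure \<mu> (D F) = emeasure \<mu> (S (p F))"
      unfolding D_def using Pbnull Ssets by (rule emeasure_Diff_null_set)
    moreover have "1 \<le> emeasure \<mu> (S (p F))"
      unfolding S_def using M2[OF cK sets lf AE, of "p F"] F(3) that by auto
    ultimately show ?thesis by simp
  qed
  have "of_nat N = (\<Sum>F\<in>\<F>. (1::ennreal))" using F(2) by simp
  also have "\<dots> \<le> (\<Sum>F\<in>\<F>. emeasure \<mu> (D F))"
    using Dge by (intro sum_mono) auto
  also have "\<dots> = emeasure \<mu> (\<Union>F\<in>\<F>. D F)"
    using Dsets disj F(1) by (intro sum_emeasure) auto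
  also have "\<dots> \<le> M"
    unfolding M_def
  proof (intro emeasure_mono)
    show "(\<Union>F\<in>\<F>. D F) \<subseteq> ball 0 R"
    proof (intro UN_least)
      fix F assume "F \<in> \<F>"
      then show "D F \<subseteq> ball 0 R" using Sball[OF pK[OF \<open>F \<in> \<F>\<close>]] unfolding D_def by auto
    qed
    show "ball 0 R \<in> sets \<mu>" using sets by auto
  qed
  finally show False using N by simp
qed

end
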